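(* Let $\mathbb K$ be a field, $x\in\mathbb K$, $0\le r\le k$, and let $\chi_k^{(r)}$ be the character (trace function) of the module $\mathsf C_k^{(r)}$. Then for $0\le\ell\le k$, $$\chi_k^{(r)}(\mathbf 1_{\ell,k})=\begin{cases}\mathsf m_{\ell,r}=\dim\mathsf C_\ell^{(r)},& r\le\ell,\\ 0,& r>\ell.\end{cases}$$
   Context: A Motzkin $k$-diagram has top vertices $1,\dots,k$ and bottom vertices $1',\dots,k'$, edges each joining two distinct vertices, each vertex on at most one edge, edges planar. $\mathsf M_k(x)$ is the free $\mathbb K$-module on Motzkin $k$-diagrams with product: stack $d_1$ above $d_2$, let $d_3$ join outer vertices connected by a path, $d_1d_2=x^\kappa d_3$ with $\kappa$ the number of closed middle loops. $\mathbf 1_{\ell,k}$ is the diagram with vertical edges $j$—$j'$ for $j\le\ell$ and all other vertices isolated. Motzkin paths: $p=(a_1,\dots,a_k)$, $a_i\in\{-1,0,1\}$, partial sums $\ge0$, rank $\sum a_i$; $\mathcal P_k^r$ those of rank $r$, $\mathsf m_{k,r}=|\mathcal P_k^r|$. Index $i$ with $a_i=1$ is paired with the smallest $j>i$ with $a_i+\dots+a_j=0$ if it exists. 1-factor of $p$: row of vertices $1..k$, paired indices joined by an edge, unpaired $a_i=1$ white, others black. $\mathsf C_k^{(r)}$: free $\mathbb K$-module on $\mathcal P_k^r$ with $d\cdot p=x^{\kappa(d,p)}q$ if $\mathrm{rank}(q)=r$ and $0$ otherwise, where $d$ is placed above the 1-factor of $p$ (bottom vertex $i'$ identified with vertex $i$),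 $\kappa(d,p)$ is the number of closed loops formed, and $q$ is the 1-factor on the top vertices in which two top vertices are joined iff in a common component and a top vertex is white iff its component contains a white vertex of $p$. *)

theory Defs
  imports Main
begin

text \<open>A Motzkin path of length k is a list of k integers in {-1,0,1} whose
partial sums are nonnegative. Positions are 1-indexed: a_i = p ! (i-1).\<close>

definition motzkin_path :: "int list \<Rightarrow> bool" where
  "motzkin_path p \<longleftrightarrow> (\<forall>a\<in>set p. a \<in> {-1,0,1}) \<and>
     (\<forall>n\<le>length p. 0 \<le> sum_list (take n p))"

definition rank :: "int list \<Rightarrow> int" where
  "rank p = sum_list p"

definition paths :: "nat \<Rightarrow> nat \<Rightarrow> int list set" where
  "paths k r = {p. length p = k \<and> motzkin_path p \<and> rank p = int r}"

definition mcount :: "nat \<Rightarrow> nat \<Rightarrow> nat" where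
  "mcount k r = card (paths k r)"

definition psum :: "int list \<Rightarrow> nat \<Rightarrow> nat \<Rightarrow> int" where
  "psum p i j = (\<Sum>t\<in>{i..j}. p ! (t - 1))"

definition paired :: "int list \<Rightarrow> nat \<Rightarrow> nat \<Rightarrow> bool" where
  "paired p i j \<longleftrightarrow> 1 \<le> i \<and> i < j \<and> j \<le> length p \<and> p ! (i - 1) = 1 \<and>
     psum p i j = 0 \<and> (\<forall>t. i < t \<and> t < j \<longrightarrow> psum p i t \<noteq> 0)"

definition white :: "int list \<Rightarrow> nat \<Rightarrow> bool" where
  "white p i \<longleftrightarrow> 1 \<le> i \<and> i \<le> length p \<and> p ! (i - 1) = 1 \<and> \<not> (\<exists>j. paired p i j)"

datatype vtx = Top nat | Bot nat

definition vidx :: "vtx \<Rightarrow> nat" where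
  "vidx v = (case v of Top i \<Rightarrow> i | Bot i \<Rightarrow> i)"

text \<open>Planarity (standard convention): drawing top vertices on a line above the
bottom ones, two edges cross iff the usual interleaving conditions hold.\<close>
definition crossing :: "vtx \<Rightarrow> vtx \<Rightarrow> vtx \<Rightarrow> vtx \<Rightarrow> bool" where
  "crossing a b c d \<longleftrightarrow>
    (case (a, b, c, d) of
       (Top i, Top j, Top s, Top t) \<Rightarrow> i < s \<and> s < j \<and> j < t
     | (Bot i, Bot j, Bot s, Bot t) \<Rightarrow> i < s \<and> s < j \<and> j < t
     | (Top i, Top j, Top s, Bot t) \<Rightarrow> i < s \<and> s < j
     | (Bot i, Bot j, Bot s, Top t) \<Rightarrow> i < s \<and> s < j
     | (Top i, Bot j, Top s, Bot t) \<Rightarrow> i < s \<and> t < j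
     | _ \<Rightarrow> False)"

definition motzkin_diagram :: "nat \<Rightarrow> vtx set set \<Rightarrow> bool" where
  "motzkin_diagram k d \<longleftrightarrow>
     (\<forall>e\<in>d. \<exists>u v. e = {u, v} \<and> u \<noteq> v \<and> 1 \<le> vidx u \<and> vidx u \<le> k \<and> 1 \<le> vidx v \<and> vidx v \<le> k) \<and>
     (\<forall>e\<in>d. \<forall>e'\<in>d. e \<noteq> e' \<longrightarrow> e \<inter> e' = {}) \<and>
     (\<forall>a b c e. {a, b} \<in> d \<longrightarrow> {c, e} \<in> d \<longrightarrow> \<not> crossing a b c e)"

text \<open>The diagram 1_{l,k}: vertical edges j -- j' for j \<le> l, all else isolated.\<close>
definition idl :: "nat \<Rightarrow> nat \<Rightarrow> vtx set set" where
  "idl l k = {{Top j, Bot j} | j. 1 \<le> j \<and> j \<le> l \<and> j \<le> k}"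

text \<open>Vertices of the stacked picture: top vertices of d, and middle vertices
(bottom vertices of d identified with the vertices of the 1-factor of p).\<close>
datatype svtx = T nat | Mid nat

definition emb :: "vtx \<Rightarrow> svtx" where
  "emb v = (case v of Top i \<Rightarrow> T i | Bot i \<Rightarrow> Mid i)"

definition sadj :: "vtx set set \<Rightarrow> int list \<Rightarrow> svtx \<Rightarrow> svtx \<Rightarrow> bool" where
  "sadj d p u v \<longleftrightarrow>
     (\<exists>a b. {a, b} \<in> d \<and> a \<noteq> b \<and> u = emb a \<and> v = emb b) \<or>
     (\<exists>i j. (paired p i j \<or> paired p j i) \<and> u = Mid i \<and> v = Mid j)"

definition sconn :: "vtx set set \<Rightarrow> int list \<Rightarrow> svtx \<Rightarrow> svtx \<Rightarrow> bool" where
  "sconn d p u v \<longleftrightarrow> (u, v) \<in> {(a, b). sadj d p a b}\<^sup>*"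

definition svert :: "nat \<Rightarrow> svtx set" where
  "svert k = {T i | i. 1 \<le> i \<and> i \<le> k} \<union> {Mid i | i. 1 \<le> i \<and> i \<le> k}"

definition scomponents :: "nat \<Rightarrow> vtx set set \<Rightarrow> int list \<Rightarrow> svtx set set" where
  "scomponents k d p = {{v. sconn d p u v} | u. u \<in> svert k}"

definition is_mid :: "svtx \<Rightarrow> bool" where
  "is_mid v = (case v of Mid _ \<Rightarrow> True | T _ \<Rightarrow> False)"

text \<open>Closed loops: components consisting of middle vertices only, each of degree 2.\<close>
definition kappa :: "nat \<Rightarrow> vtx set set \<Rightarrow> int list \<Rightarrow> nat" where
  "kappa k d p = card {C \<in> scomponents k d p.
      (\<forall>v\<in>C. is_mid v) \<and> (\<forall>v\<in>C. card {w. sadj d p v w} = 2)}"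

text \<open>Coefficient of the basis path q in d \<cdot> p: it is x^kappa if the 1-factor on
the top vertices produced by stacking d on the 1-factor of p is the 1-factor of q,
and 0 otherwise. (The rank condition is imposed by the basis of C_k^(r).)\<close>
definition act_coeff :: "'a::field \<Rightarrow> nat \<Rightarrow> vtx set set \<Rightarrow> int list \<Rightarrow> int list \<Rightarrow> 'a" where
  "act_coeff x k d p q =
     (if (\<forall>i j. 1 \<le> i \<and> i \<le> k \<and> 1 \<le> j \<and> j \<le> k \<and> i \<noteq> j \<longrightarrow>
              ((paired q i j \<or> paired q j i) \<longleftrightarrow> sconn d p (T i) (T j))) \<and>
         (\<forall>i. 1 \<le> i \<and> i \<le> k \<longrightarrow>
              (white q i \<longleftrightarrow> (\<exists>m. white p m \<and> sconn d p (T i) (Mid m))))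
      then x ^ kappa k d p else 0)"

text \<open>Character of C_k^(r): trace of the action of d on the free module with basis
paths k r, i.e. the sum of the diagonal coefficients.\<close>
definition character :: "'a::field \<Rightarrow> nat \<Rightarrow> nat \<Rightarrow> vtx set set \<Rightarrow> 'a" where
  "character x k r d = (\<Sum>p\<in>paths k r. act_coeff x k d p p)"

end

theory Submission
  imports Defs
begin


definition ps :: "int list \<Rightarrow> nat \<Rightarrow> int" where "ps p n = sum_list (take n p)"

lemma ps_Suc: "n < length p \<Longrightarrow> ps p (Suc n) = ps p n + p ! n"
  by (simp add: ps_def take_Suc_conv_app_nth)

lemma ps_sum: "n \<le> length p \<Longrightarrow> ps p n = (\<Sum>t\<in>{1..n}. p ! (t - 1))"
proof (induction n)
  case 0 then show ?case by (simp add: ps_def)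
next
  case (Suc n)
  have "{1..Suc n} = insert (Suc n) {1..n}" by auto
  then show ?case using Suc by (simp add: ps_Suc)
qed

lemma psum_eq: "1 \<le> i \<Longrightarrow> i \<le> j \<Longrightarrow> j \<le> length p \<Longrightarrow> psum p i j = ps p j - ps p (i - 1)"
proof -
  assume a: "1 \<le> i" "i \<le> j" "j \<le> length p"
  have e: "{i..j} = {1..j} - {1..i-1}" using a by auto
  have "(\<Sum>t\<in>{1..j} - {1..i-1}. p ! (t - 1)) = (\<Sum>t\<in>{1..j}. p ! (t - 1)) - (\<Sum>t\<in>{1..i-1}. p ! (t - 1))"
    by (rule sum_diff) (use a in auto)
  then have "psum p i j = (\<Sum>t\<in>{1..j}. p ! (t - 1)) - (\<Sum>t\<in>{1..i-1}. p ! (t - 1))"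
    unfolding psum_def e by simp
  then show ?thesis using a by (simp add: ps_sum)
qed

lemma mp_vals: "motzkin_path p \<Longrightarrow> t < length p \<Longrightarrow> p ! t \<in> {-1,0,1}"
  unfolding motzkin_path_def using nth_mem by blast

lemma mp_nonneg: "motzkin_path p \<Longrightarrow> n \<le> length p \<Longrightarrow> 0 \<le> ps p n"
  unfolding motzkin_path_def ps_def by blast

lemma paired_pos:
  assumes mp: "motzkin_path p" and pr: "paired p i j" and it: "i \<le> t"
  shows "t < j \<Longrightarrow> ps p t > ps p (i - 1)"
  using it
proof (induction t rule: dec_induct)
  case base
  from pr have "1 \<le> i" "i \<le> length p" "p ! (i - 1) = 1" unfolding paired_def by auto
  then have "ps p i = ps p (i - 1) + 1" using ps_Suc[of "i - 1" p] by simp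
  then show ?case by simp
next
  case (step n)
  from pr have j: "j \<le> length p" "1 \<le> i" and mn: "\<forall>t. i < t \<and> t < j \<longrightarrow> psum p i t \<noteq> 0"
    unfolding paired_def by auto
  have "n < length p" using step j by simp
  then have e: "ps p (Suc n) = ps p n + p ! n" by (rule ps_Suc)
  have "p ! n \<in> {-1,0,1}" using mp_vals[OF mp \<open>n < length p\<close>] .
  then have ge: "ps p (Suc n) \<ge> ps p (i - 1)" using step e by auto
  have "psum p i (Suc n) \<noteq> 0" using mn step by auto
  then have "ps p (Suc n) \<noteq> ps p (i - 1)" using psum_eq[of i "Suc n" p] step j by auto
  then show ?case using ge by simp
qed

lemma paired_closer:
  assumes mp: "motzkin_path p" and pr: "paired p i j"
  shows "p ! (j - 1) = -1"
proof -
  from pr have a: "1 \<le> i" "i < j" "j \<le> length p" "psum p i j = 0" unfolding paired_def by auto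
  have "ps p j = ps p (i - 1)" using a psum_eq[of i j p] by simp
  moreover have "ps p (j - 1) > ps p (i - 1)" using paired_pos[OF mp pr, of "j - 1"] a by simp
  moreover have "ps p j = ps p (j - 1) + p ! (j - 1)" using ps_Suc[of "j - 1" p] a by simp
  moreover have "p ! (j - 1) \<in> {-1,0,1}" using mp_vals[OF mp, of "j - 1"] a by simp
  ultimately show ?thesis by auto
qed

lemma paired_opener: "paired p i j \<Longrightarrow> p ! (i - 1) = 1"
  unfolding paired_def by auto

lemma same_closer:
  assumes mp: "motzkin_path p" and a: "paired p i j" and b: "paired p m j" and lt: "i < m"
  shows False
proof -
  from a have a1: "1 \<le> i" "j \<le> length p" "psum p i j = 0" unfolding paired_def by auto
  from b have b1: "1 \<le> m" "m < j" "psum p m j = 0" unfolding paired_def by auto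
  have "ps p j = ps p (i - 1)" using a1 psum_eq[of i j p] lt b1 by simp
  moreover have "ps p j = ps p (m - 1)" using b1 psum_eq[of m j p] a1 by simp
  moreover have "ps p (m - 1) > ps p (i - 1)" using paired_pos[OF mp a, of "m - 1"] lt b1 by simp
  ultimately show False by simp
qed

lemma same_opener:
  assumes a: "paired p i j" and b: "paired p i m" and lt: "j < m"
  shows False
  using a b lt unfolding paired_def by auto

definition PP where "PP p a b \<longleftrightarrow> paired p a b \<or> paired p b a"

lemma PP_unique:
  assumes mp: "motzkin_path p" and "PP p a b" "PP p a c"
  shows "b = c"
proof -
  have c1: "\<not> (paired p a b \<and> paired p c a)" "\<not> (paired p b a \<and> paired p a c)"
    using paired_closer[OF mp] paired_opener by force+
  have c2: "paired p a b \<Longrightarrow> paired p a c \<Longrightarrow> b = c"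
    using same_opener by (metis linorder_neqE_nat)
  have c3: "paired p b a \<Longrightarrow> paired p c a \<Longrightarrow> b = c"
    using same_closer[OF mp] by (metis linorder_neqE_nat)
  show ?thesis using assms c1 c2 c3 unfolding PP_def by blast
qed

lemma closer_exists:
  assumes mp: "motzkin_path p" and i: "1 \<le> i" "i \<le> length p" and ai: "p ! (i - 1) = -1"
  shows "\<exists>j. paired p j i"
proof -
  define A where "A = {t. 1 \<le> t \<and> t \<le> i \<and> ps p (t - 1) \<le> ps p i}"
  have "1 \<in> A" using mp_nonneg[OF mp i(2)] using i unfolding A_def by (simp add: ps_def)
  moreover have fA: "finite A" unfolding A_def by simp
  ultimately have jA: "Max A \<in> A" and jmax: "\<And>t. t \<in> A \<Longrightarrow> t \<le> Max A" by (auto intro: Max_in)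
  define j where "j = Max A"
  have j1: "1 \<le> j" "j \<le> i" "ps p (j - 1) \<le> ps p i" using jA unfolding j_def A_def by auto
  have si: "ps p i = ps p (i - 1) - 1" using ps_Suc[of "i - 1" p] i ai by simp
  have "j \<noteq> i" using j1 si by auto
  then have ji: "j < i" using j1 by simp
  have above: "\<And>t. j < t \<Longrightarrow> t \<le> i \<Longrightarrow> ps p (t - 1) > ps p i"
  proof -
    fix t assume "j < t" "t \<le> i"
    then have "t \<notin> A" using jmax unfolding j_def by force
    then show "ps p (t - 1) > ps p i" using \<open>j < t\<close> \<open>t \<le> i\<close> j1 unfolding A_def by auto
  qed
  have sj: "ps p j = ps p (j - 1) + p ! (j - 1)" using ps_Suc[of "j - 1" p] j1 ji i by simp
  have "p ! (j - 1) \<in> {-1,0,1}" using mp_vals[OF mp, of "j - 1"] ji i j1 by simp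
  moreover have "ps p j > ps p i" using above[of "Suc j"] ji by simp
  ultimately have aj: "p ! (j - 1) = 1" and eq: "ps p (j - 1) = ps p i" using sj j1 by auto
  have "paired p j i"
    unfolding paired_def
  proof (intro conjI allI impI)
    show "psum p j i = 0" using psum_eq[of j i p] j1 ji i eq by simp
    fix t assume "j < t \<and> t < i"
    then have "ps p t > ps p i" using above[of "Suc t"] by simp
    then show "psum p j t \<noteq> 0" using psum_eq[of j t p] j1 \<open>j < t \<and> t < i\<close> i eq by simp
  qed (use j1 ji i aj in auto)
  then show ?thesis by blast
qed



lemma idl_edge:
  assumes "l \<le> k"
  shows "({a, b} \<in> idl l k \<and> a \<noteq> b) \<longleftrightarrow>
    (\<exists>j. 1 \<le> j \<and> j \<le> l \<and> ((a = Top j \<and> b = Bot j) \<or> (a = Bot j \<and> b = Top j)))"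
  using assms unfolding idl_def doubleton_eq_iff by auto

lemma sadj_idl:
  assumes "l \<le> k"
  shows "sadj (idl l k) p u v \<longleftrightarrow>
    (\<exists>j. 1 \<le> j \<and> j \<le> l \<and> ((u = T j \<and> v = Mid j) \<or> (u = Mid j \<and> v = T j))) \<or>
    (\<exists>i j. PP p i j \<and> u = Mid i \<and> v = Mid j)"
proof -
  have "(\<exists>a b. {a, b} \<in> idl l k \<and> a \<noteq> b \<and> u = emb a \<and> v = emb b) \<longleftrightarrow>
    (\<exists>j. 1 \<le> j \<and> j \<le> l \<and> ((u = T j \<and> v = Mid j) \<or> (u = Mid j \<and> v = T j)))"
  proof
    assume "\<exists>a b. {a, b} \<in> idl l k \<and> a \<noteq> b \<and> u = emb a \<and> v = emb b"
    then obtain a b where "{a, b} \<in> idl l k \<and> a \<noteq> b" "u = emb a" "v = emb b" by blast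
    then show "\<exists>j. 1 \<le> j \<and> j \<le> l \<and> ((u = T j \<and> v = Mid j) \<or> (u = Mid j \<and> v = T j))"
      unfolding idl_edge[OF assms] emb_def by auto
  next
    assume "\<exists>j. 1 \<le> j \<and> j \<le> l \<and> ((u = T j \<and> v = Mid j) \<or> (u = Mid j \<and> v = T j))"
    then obtain j where j: "1 \<le> j" "j \<le> l" "(u = T j \<and> v = Mid j) \<or> (u = Mid j \<and> v = T j)" by blast
    show "\<exists>a b. {a, b} \<in> idl l k \<and> a \<noteq> b \<and> u = emb a \<and> v = emb b"
    proof (cases "u = T j \<and> v = Mid j")
      case True
      have "{Top j, Bot j} \<in> idl l k \<and> Top j \<noteq> Bot j" unfolding idl_edge[OF assms] using j by blast
      then show ?thesis using True unfolding emb_def by force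
    next
      case False
      have "{Bot j, Top j} \<in> idl l k \<and> Bot j \<noteq> Top j" unfolding idl_edge[OF assms] using j by blast
      then show ?thesis using False j unfolding emb_def by force
    qed
  qed
  then show ?thesis unfolding sadj_def PP_def by blast
qed

lemma sconn_iso:
  assumes "sconn d p u v" "\<And>w. \<not> sadj d p u w"
  shows "v = u"
  using assms unfolding sconn_def by (auto elim: converse_rtranclE)

lemma sconn_closed:
  assumes "sconn d p u v" "u \<in> C" "\<And>a b. a \<in> C \<Longrightarrow> sadj d p a b \<Longrightarrow> b \<in> C"
  shows "v \<in> C"
  using assms(1) unfolding sconn_def
proof (induction rule: rtrancl_induct)
  case base then show ?case using assms(2) .
next
  case (step y z) then show ?case using assms(3) by auto
qed

lemma sconn_step: "sadj d p u v \<Longrightarrow> sconn d p v w \<Longrightarrow> sconn d p u w"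
  unfolding sconn_def by (simp add: converse_rtrancl_into_rtrancl)

lemma sconn_refl: "sconn d p u u"
  unfolding sconn_def by simp



lemma PP_sym: "PP p a b \<longleftrightarrow> PP p b a" unfolding PP_def by blast

lemma iso_T: "l \<le> k \<Longrightarrow> l < i \<Longrightarrow> \<not> sadj (idl l k) p (T i) w"
  by (simp add: sadj_idl)

lemma iso_sconn: assumes "l \<le> k" "l < i" "sconn (idl l k) p (T i) v" shows "v = T i"
  using assms(3) by (rule sconn_iso) (rule iso_T[OF assms(1,2)])

lemma paired_bounds: "paired p i j \<Longrightarrow> 1 \<le> i \<and> i < j \<and> j \<le> length p"
  unfolding paired_def by auto

lemma coeff_bad:
  assumes lk: "l \<le> k" and mp: "motzkin_path p" and len: "length p = k"
    and i: "l < i" "i \<le> k" and ai: "p ! (i - 1) \<noteq> 0"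
  shows "act_coeff x k (idl l k) p p = 0"
proof -
  have v: "p ! (i - 1) \<in> {-1,0,1}" using mp_vals[OF mp, of "i - 1"] i len by simp
  have "\<exists>j. 1 \<le> j \<and> j \<le> k \<and> i \<noteq> j \<and> PP p i j \<or> white p i"
  proof (cases "p ! (i - 1) = 1")
    case True
    show ?thesis
    proof (cases "\<exists>j. paired p i j")
      case True
      then obtain j where "paired p i j" by blast
      then have "1 \<le> j \<and> j \<le> k \<and> i \<noteq> j \<and> PP p i j"
        using paired_bounds[of p i j] len unfolding PP_def by auto
      then show ?thesis by blast
    next
      case False
      then show ?thesis using True i len unfolding white_def by auto
    qed
  next
    case False
    then have "p ! (i - 1) = -1" using v ai by auto
    then obtain j where "paired p j i" using closer_exists[OF mp, of i] i len by auto
    then have "1 \<le> j \<and> j \<le> k \<and> i \<noteq> j \<and> PP p i j"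
      using paired_bounds[of p j i] len i unfolding PP_def by auto
    then show ?thesis by blast
  qed
  then have "\<not> ((\<forall>i j. 1 \<le> i \<and> i \<le> k \<and> 1 \<le> j \<and> j \<le> k \<and> i \<noteq> j \<longrightarrow>
              ((paired p i j \<or> paired p j i) \<longleftrightarrow> sconn (idl l k) p (T i) (T j))) \<and>
         (\<forall>i. 1 \<le> i \<and> i \<le> k \<longrightarrow>
              (white p i \<longleftrightarrow> (\<exists>m. white p m \<and> sconn (idl l k) p (T i) (Mid m)))))"
    (is "\<not> (?A \<and> ?B)")
  proof (elim disjE exE conjE)
    fix j assume j: "1 \<le> j" "j \<le> k" "i \<noteq> j" "PP p i j"
    show "\<not> (?A \<and> ?B)"
    proof
      assume "?A \<and> ?B"
      then have "sconn (idl l k) p (T i) (T j)" using j i unfolding PP_def by auto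
      then have "T j = T i" by (rule iso_sconn[OF lk i(1)])
      then show False using j by simp
    qed
  next
    assume w: "white p i"
    show "\<not> (?A \<and> ?B)"
    proof
      assume "?A \<and> ?B"
      then obtain m where "sconn (idl l k) p (T i) (Mid m)" using w i by auto
      then have "Mid m = T i" by (rule iso_sconn[OF lk i(1)])
      then show False by simp
    qed
  qed
  then show ?thesis unfolding act_coeff_def by (rule if_not_P)
qed

lemma ps_zeros:
  assumes z: "\<forall>t. l < t \<and> t \<le> k \<longrightarrow> p ! (t - 1) = 0" and len: "length p = k"
    and n: "l \<le> n" "n \<le> k"
  shows "ps p n = ps p l"
  using n(1,2)
proof (induction n rule: dec_induct)
  case base then show ?case by simp
next
  case (step m)
  have "p ! m = 0" using z step(1,2) n(2) by (metis Suc_le_eq diff_Suc_1 le_imp_less_Suc less_le_trans)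
  then show ?case using ps_Suc[of m p] step len n by simp
qed

lemma good_paired_bound:
  assumes mp: "motzkin_path p" and len: "length p = k" and lk: "l \<le> k"
    and z: "\<forall>t. l < t \<and> t \<le> k \<longrightarrow> p ! (t - 1) = 0"
    and pr: "paired p a b"
  shows "a \<le> l \<and> b \<le> l"
proof -
  have b: "1 \<le> a" "a < b" "b \<le> k" "p ! (a - 1) = 1" "psum p a b = 0"
     and mn: "\<forall>t. a < t \<and> t < b \<longrightarrow> psum p a t \<noteq> 0"
    using pr len unfolding paired_def by auto
  have al: "a \<le> l"
  proof (rule ccontr)
    assume "\<not> a \<le> l" then have "p ! (a - 1) = 0" using z b by auto
    then show False using b by simp
  qed
  show ?thesis
  proof (rule ccontr)
    assume "\<not> (a \<le> l \<and> b \<le> l)"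
    then have bl: "l < b" using al by simp
    have "ps p b = ps p l" using ps_zeros[OF z len, of b] bl b by simp
    then have e: "psum p a l = 0" using b psum_eq[of a b p] psum_eq[of a l p] al lk len by simp
    show False
    proof (cases "a = l")
      case True
      have "ps p a = ps p (a - 1) + 1" using ps_Suc[of "a - 1" p] b len by simp
      then show False using e True psum_eq[of a a p] b len by simp
    next
      case False
      then show False using mn e al bl by auto
    qed
  qed
qed

lemma sadj_TM: "l \<le> k \<Longrightarrow> 1 \<le> j \<Longrightarrow> j \<le> l \<Longrightarrow> sadj (idl l k) p (T j) (Mid j)"
  by (simp add: sadj_idl)
lemma sadj_MT: "l \<le> k \<Longrightarrow> 1 \<le> j \<Longrightarrow> j \<le> l \<Longrightarrow> sadj (idl l k) p (Mid j) (T j)"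
  by (simp add: sadj_idl)
lemma sadj_MM: "l \<le> k \<Longrightarrow> PP p i j \<Longrightarrow> sadj (idl l k) p (Mid i) (Mid j)"
  by (simp add: sadj_idl)

definition Cc where "Cc p i = {T i, Mid i} \<union> {Mid m | m. PP p i m} \<union> {T m | m. PP p i m}"

lemma Cc_closed:
  assumes mp: "motzkin_path p" and lk: "l \<le> k" and a: "a \<in> Cc p i" and s: "sadj (idl l k) p a b"
  shows "b \<in> Cc p i"
proof -
  have u: "\<And>m m'. PP p i m \<Longrightarrow> PP p m m' \<Longrightarrow> m' = i"
    using PP_unique[OF mp] PP_sym by metis
  have memT: "T j \<in> Cc p i \<longleftrightarrow> j = i \<or> PP p i j" for j unfolding Cc_def by auto
  have memM: "Mid j \<in> Cc p i \<longleftrightarrow> j = i \<or> PP p i j" for j unfolding Cc_def by auto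
  from s consider (v) j where "(a = T j \<and> b = Mid j) \<or> (a = Mid j \<and> b = T j)"
    | (h) m m' where "PP p m m'" "a = Mid m" "b = Mid m'"
    unfolding sadj_idl[OF lk] by blast
  then show ?thesis
  proof cases
    case v then show ?thesis using a memT memM by metis
  next
    case h
    then have "m = i \<or> PP p i m" using a memM by simp
    then show ?thesis using h u memM by metis
  qed
qed

lemma coeff_good:
  assumes lk: "l \<le> k" and mp: "motzkin_path p" and len: "length p = k"
    and z: "\<forall>t. l < t \<and> t \<le> k \<longrightarrow> p ! (t - 1) = 0"
  shows "act_coeff x k (idl l k) p p = 1"
proof -
  let ?d = "idl l k"
  have PPb: "\<And>a b. PP p a b \<Longrightarrow> 1 \<le> a \<and> a \<le> l \<and> 1 \<le> b \<and> b \<le> l"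
    using good_paired_bound[OF mp len lk z] paired_bounds unfolding PP_def
    by (metis le_less_trans less_imp_le_nat not_le)
  have inC: "\<And>i v. 1 \<le> i \<Longrightarrow> i \<le> l \<Longrightarrow> sconn ?d p (T i) v \<Longrightarrow> v \<in> Cc p i"
  proof -
    fix i v assume "1 \<le> i" "i \<le> l" and s: "sconn ?d p (T i) v"
    have "T i \<in> Cc p i" unfolding Cc_def by simp
    then show "v \<in> Cc p i" using sconn_closed[OF s] Cc_closed[OF mp lk] by blast
  qed
  have TM: "\<And>i v. 1 \<le> i \<Longrightarrow> i \<le> l \<Longrightarrow> sconn ?d p (Mid i) v \<Longrightarrow> sconn ?d p (T i) v"
    using sconn_step sadj_TM[OF lk] by blast
  have c1: "\<forall>i j. 1 \<le> i \<and> i \<le> k \<and> 1 \<le> j \<and> j \<le> k \<and> i \<noteq> j \<longrightarrow>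
              ((paired p i j \<or> paired p j i) \<longleftrightarrow> sconn ?d p (T i) (T j))"
  proof (intro allI impI)
    fix i j assume ij: "1 \<le> i \<and> i \<le> k \<and> 1 \<le> j \<and> j \<le> k \<and> i \<noteq> j"
    show "(paired p i j \<or> paired p j i) \<longleftrightarrow> sconn ?d p (T i) (T j)"
    proof
      assume "paired p i j \<or> paired p j i"
      then have P: "PP p i j" unfolding PP_def .
      then have b: "1 \<le> i" "i \<le> l" "1 \<le> j" "j \<le> l" using PPb by auto
      have "sconn ?d p (Mid j) (T j)"
        using sconn_step[OF sadj_MT[OF lk b(3,4)] sconn_refl] .
      then have "sconn ?d p (Mid i) (T j)"
        using sconn_step[OF sadj_MM[OF lk P]] by blast
      then show "sconn ?d p (T i) (T j)" using TM b by blast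
    next
      assume s: "sconn ?d p (T i) (T j)"
      have il: "i \<le> l" using iso_sconn[OF lk _ s] ij by force
      have "T j \<in> Cc p i" using inC[OF _ il s] ij by blast
      then show "paired p i j \<or> paired p j i" using ij unfolding Cc_def PP_def by auto
    qed
  qed
  have c2: "\<forall>i. 1 \<le> i \<and> i \<le> k \<longrightarrow>
              (white p i \<longleftrightarrow> (\<exists>m. white p m \<and> sconn ?d p (T i) (Mid m)))"
  proof (intro allI impI)
    fix i assume i: "1 \<le> i \<and> i \<le> k"
    show "white p i \<longleftrightarrow> (\<exists>m. white p m \<and> sconn ?d p (T i) (Mid m))"
    proof
      assume w: "white p i"
      have il: "i \<le> l"
      proof (rule ccontr)
        assume "\<not> i \<le> l" then have "p ! (i - 1) = 0" using z i by auto
        then show False using w unfolding white_def by simp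
      qed
      have "sconn ?d p (T i) (Mid i)"
        using sconn_step[OF sadj_TM[OF lk _ il] sconn_refl] i by blast
      then show "\<exists>m. white p m \<and> sconn ?d p (T i) (Mid m)" using w by blast
    next
      assume "\<exists>m. white p m \<and> sconn ?d p (T i) (Mid m)"
      then obtain m where w: "white p m" and s: "sconn ?d p (T i) (Mid m)" by blast
      have il: "i \<le> l" using iso_sconn[OF lk _ s] by force
      have "Mid m \<in> Cc p i" using inC[OF _ il s] i by blast
      then have "m = i \<or> PP p i m" unfolding Cc_def by auto
      moreover have "\<not> PP p i m"
        using w paired_closer[OF mp, of i m] unfolding PP_def white_def by force
      ultimately show "white p i" using w by blast
    qed
  qed
  have kz: "kappa k ?d p = 0"
  proof -
    have E: "{C \<in> scomponents k ?d p. (\<forall>v\<in>C. is_mid v) \<and> (\<forall>v\<in>C. card {w. sadj ?d p v w} = 2)} = {}"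
    proof (rule ccontr)
      assume "\<not> ?thesis"
      then obtain u where u: "u \<in> svert k" and
        all: "\<forall>v\<in>{v. sconn ?d p u v}. is_mid v" "\<forall>v\<in>{v. sconn ?d p u v}. card {w. sadj ?d p v w} = 2"
        unfolding scomponents_def by blast
      have uu: "sconn ?d p u u" by (rule sconn_refl)
      show False
      proof (cases u)
        case (T i) then show False using all(1) uu unfolding is_mid_def by auto
      next
        case (Mid i)
        then have i: "1 \<le> i" "i \<le> k" using u unfolding svert_def by auto
        show False
        proof (cases "i \<le> l")
          case True
          have "sconn ?d p u (T i)"
            using sconn_step[OF sadj_MT[OF lk i(1) True] sconn_refl] Mid by simp
          then show False using all(1) unfolding is_mid_def by force
        next
          case False
          have ai: "p ! (i - 1) = 0" using z False i by simp
          have "\<not> PP p i m" for m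
            using paired_closer[OF mp, of m i] paired_opener[of p i m] ai unfolding PP_def by auto
          then have "{w. sadj ?d p u w} = {}" using False Mid unfolding sadj_idl[OF lk] by auto
          then have "card {w. sadj ?d p u w} = 0" by simp
          moreover have "card {w. sadj ?d p u w} = 2" using all(2) uu by blast
          ultimately show False by simp
        qed
      qed
    qed
    show ?thesis unfolding kappa_def E by simp
  qed
  have cond: "(\<forall>i j. 1 \<le> i \<and> i \<le> k \<and> 1 \<le> j \<and> j \<le> k \<and> i \<noteq> j \<longrightarrow>
              ((paired p i j \<or> paired p j i) \<longleftrightarrow> sconn ?d p (T i) (T j))) \<and>
         (\<forall>i. 1 \<le> i \<and> i \<le> k \<longrightarrow>
              (white p i \<longleftrightarrow> (\<exists>m. white p m \<and> sconn ?d p (T i) (Mid m))))"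
    using c1 c2 by (rule conjI)
  show ?thesis unfolding act_coeff_def kz by (subst if_P[OF cond]) simp
qed



lemma finite_paths: "finite (paths k r)"
proof -
  have "paths k r \<subseteq> {xs. set xs \<subseteq> {-1,0,1} \<and> length xs = k}"
    unfolding paths_def motzkin_path_def by auto
  moreover have "finite {xs. set xs \<subseteq> ({-1,0,1}::int set) \<and> length xs = k}"
    by (rule finite_lists_length_eq) simp
  ultimately show ?thesis by (rule finite_subset)
qed

lemma sum_le_len: "\<forall>a\<in>set p. a \<le> 1 \<Longrightarrow> sum_list p \<le> int (length p)"
  by (induction p) auto

lemma paths_empty: "l < r \<Longrightarrow> paths l r = {}"
proof -
  assume lr: "l < r"
  { fix p assume "p \<in> paths l r"
    then have "length p = l" "motzkin_path p" "sum_list p = int r" unfolding paths_def rank_def by auto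
    moreover have "\<forall>a\<in>set p. a \<le> 1" using \<open>motzkin_path p\<close> unfolding motzkin_path_def by auto
    ultimately have False using sum_le_len[of p] lr by simp }
  then show ?thesis by blast
qed

definition Az where "Az k r l = {p \<in> paths k r. \<forall>t. l < t \<and> t \<le> k \<longrightarrow> p ! (t - 1) = 0}"

lemma Az_image:
  assumes lk: "l \<le> k"
  shows "Az k r l = (\<lambda>q. q @ replicate (k - l) 0) ` paths l r"
proof
  show "(\<lambda>q. q @ replicate (k - l) 0) ` paths l r \<subseteq> Az k r l"
  proof
    fix p assume "p \<in> (\<lambda>q. q @ replicate (k - l) 0) ` paths l r"
    then obtain q where q: "q \<in> paths l r" and p: "p = q @ replicate (k - l) 0" by blast
    have ql: "length q = l" and mq: "motzkin_path q" and rq: "sum_list q = int r"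
      using q unfolding paths_def rank_def by auto
    have len: "length p = k" using p ql lk by simp
    have mp: "motzkin_path p"
      unfolding motzkin_path_def
    proof (intro conjI ballI allI impI)
      fix a assume "a \<in> set p" then show "a \<in> {-1,0,1}"
        using p mq unfolding motzkin_path_def by (auto split: if_splits)
    next
      fix n assume "n \<le> length p"
      show "0 \<le> sum_list (take n p)"
      proof (cases "n \<le> l")
        case True
        then show ?thesis using p mq ql unfolding motzkin_path_def by simp
      next
        case False
        then have "take n p = q @ take (n - l) (replicate (k - l) 0)" using p ql by simp
        then have "sum_list (take n p) = sum_list q" by (simp add: sum_list_replicate)
        then show ?thesis using mq ql unfolding motzkin_path_def by (metis order_refl take_all)
      qed
    qed
    have "rank p = int r" using p rq unfolding rank_def by (simp add: sum_list_replicate)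
    moreover have "\<forall>t. l < t \<and> t \<le> k \<longrightarrow> p ! (t - 1) = 0"
      using p ql by (auto simp: nth_append)
    ultimately show "p \<in> Az k r l" using len mp unfolding Az_def paths_def by auto
  qed
next
  show "Az k r l \<subseteq> (\<lambda>q. q @ replicate (k - l) 0) ` paths l r"
  proof
    fix p assume "p \<in> Az k r l"
    then have len: "length p = k" and mp: "motzkin_path p" and rp: "sum_list p = int r"
      and z: "\<forall>t. l < t \<and> t \<le> k \<longrightarrow> p ! (t - 1) = 0"
      unfolding Az_def paths_def rank_def by auto
    have d: "drop l p = replicate (k - l) 0"
    proof (rule nth_equalityI)
      show "length (drop l p) = length (replicate (k - l) (0::int))" using len by simp
      fix i assume "i < length (drop l p)"
      then have "l < Suc (l + i) \<and> Suc (l + i) \<le> k" using len by simp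
      then have "p ! (Suc (l + i) - 1) = 0" using z by blast
      then show "drop l p ! i = replicate (k - l) 0 ! i" using \<open>i < length (drop l p)\<close> lk len by simp
    qed
    have pe: "p = take l p @ replicate (k - l) 0" using d by (metis append_take_drop_id)
    have "take l p \<in> paths l r"
      unfolding paths_def rank_def motzkin_path_def
    proof (intro CollectI conjI ballI allI impI)
      show "length (take l p) = l" using len lk by simp
      fix a assume "a \<in> set (take l p)"
      then show "a \<in> {-1,0,1}" using mp unfolding motzkin_path_def by (meson in_set_takeD)
    next
      fix n assume "n \<le> length (take l p)"
      then show "0 \<le> sum_list (take n (take l p))" using mp len lk unfolding motzkin_path_def by simp
    next
      have "sum_list p = sum_list (take l p)" by (subst pe) (simp add: sum_list_replicate)
      then show "sum_list (take l p) = int r" using rp by simp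
    qed
    then show "p \<in> (\<lambda>q. q @ replicate (k - l) 0) ` paths l r" using pe by blast
  qed
qed

lemma card_Az: "l \<le> k \<Longrightarrow> card (Az k r l) = mcount l r"
  unfolding Az_image mcount_def
  by (rule card_image) (simp add: inj_on_def)

theorem mainTheorem12:
  fixes x :: "'a::field" and k r l :: nat
  assumes "r \<le> k" and "l \<le> k"
  shows "character x k r (idl l k) = (if r \<le> l then of_nat (mcount l r) else 0)"
proof -
  have "character x k r (idl l k) = (\<Sum>p\<in>paths k r. if p \<in> Az k r l then 1 else 0)"
    unfolding character_def
  proof (rule sum.cong)
    fix p assume p: "p \<in> paths k r"
    then have len: "length p = k" and mp: "motzkin_path p" unfolding paths_def by auto
    show "act_coeff x k (idl l k) p p = (if p \<in> Az k r l then 1 else 0)"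
    proof (cases "p \<in> Az k r l")
      case True
      then show ?thesis using coeff_good[OF assms(2) mp len] unfolding Az_def by simp
    next
      case False
      then obtain t where "l < t" "t \<le> k" "p ! (t - 1) \<noteq> 0" using p unfolding Az_def by auto
      then show ?thesis using coeff_bad[OF assms(2) mp len] False by simp
    qed
  qed simp
  also have "\<dots> = of_nat (card (Az k r l))"
  proof -
    have "Az k r l = {p \<in> paths k r. p \<in> Az k r l}" unfolding Az_def by auto
    then have "(\<Sum>p\<in>paths k r. if p \<in> Az k r l then (1::'a) else 0) = (\<Sum>p\<in>Az k r l. 1)"
      using sum.inter_filter[OF finite_paths[of k r], where g="\<lambda>_. (1::'a)" and P="\<lambda>p. p \<in> Az k r l"] by simp
    then show ?thesis by simp
  qed
  also have "\<dots> = of_nat (mcount l r)" using card_Az[OF assms(2)] by simp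
  also have "\<dots> = (if r \<le> l then of_nat (mcount l r) else 0)"
    using paths_empty[of l r] unfolding mcount_def by auto
  finally show ?thesis .
qed


end
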